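(* For every integer $n \geq 0$, $$\int_0^{\pi/2} x\cos^{2n}x\,dx = \frac{\binom{2n}{n}}{2^{2n+2}}\left(\frac{\pi^{2}}{2} - \sum_{k=1}^{n}\frac{2^{2k}}{k^{2}\binom{2k}{k}}\right),$$ and $$\int_0^{\pi/2} x\cos^{2n+1}x\,dx = \frac{2^{2n}}{(2n+1)\binom{2n}{n}}\left(\frac{\pi}{2} - \sum_{k=0}^{n}\frac{\binom{2k}{k}}{2^{2k}(2k+1)}\right).$$
   Context: An empty sum is $0$. *)

theory Defs
  imports "HOL-Analysis.Analysis"
begin

end

theory Submission
  imports Defs
begin

definition J :: "nat \<Rightarrow> real" where
  "J m = integral {0..pi/2} (\<lambda>x::real. x * cos x ^ m)"

lemma J_int: "(\<lambda>x::real. x * cos x ^ m) integrable_on {0..pi/2}"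
  by (intro integrable_continuous_interval continuous_intros)

lemma Gderiv: "((\<lambda>x. x * cos x ^ (k+1) * sin x + cos x ^ (k+2) / real (k+2)) has_real_derivative (x * (real (k+2) * cos x ^ (k+2) - real (k+1) * cos x ^ k))) (at x)"
proof -
  have d1: "((\<lambda>x. cos x ^ (k+1)) has_real_derivative (real (k+1) * cos x ^ k * (- sin x))) (at x)"
    using DERIV_power_Suc[OF DERIV_cos[of x], of k] by (simp add: algebra_simps)
  have d2: "((\<lambda>x. cos x ^ (k+2)) has_real_derivative (real (k+2) * cos x ^ (k+1) * (- sin x))) (at x)"
    using DERIV_power_Suc[OF DERIV_cos[of x], of "k+1"] by (simp add: algebra_simps)
  have "((\<lambda>x. x * cos x ^ (k+1) * sin x + cos x ^ (k+2) / real (k+2)) has_real_derivative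
     (x * cos x ^ (k+1) * cos x + (x * (real (k+1) * cos x ^ k * (- sin x)) + 1 * cos x ^ (k+1)) * sin x
      + real (k+2) * cos x ^ (k+1) * (- sin x) / real (k+2))) (at x)"
    by (intro DERIV_add DERIV_mult' DERIV_ident d1 d2 DERIV_sin DERIV_cdivide)
  moreover have "x * cos x ^ (k+1) * cos x + (x * (real (k+1) * cos x ^ k * (- sin x)) + 1 * cos x ^ (k+1)) * sin x
      + real (k+2) * cos x ^ (k+1) * (- sin x) / real (k+2) = x * (real (k+2) * cos x ^ (k+2) - real (k+1) * cos x ^ k)"
  proof -
    have q: "real (k+2) * cos x ^ (k+1) * (- sin x) / real (k+2) = - (cos x^(k+1) * sin x)" by simp
    have s: "sin x * sin x = 1 - cos x * cos x" using sin_squared_eq[of x] by (simp add: power2_eq_square)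
    have "x * cos x ^ (k+1) * cos x + (x * (real (k+1) * cos x ^ k * (- sin x)) + 1 * cos x ^ (k+1)) * sin x
      + real (k+2) * cos x ^ (k+1) * (- sin x) / real (k+2)
      = x * cos x ^ (k+1) * cos x - x * real (k+1) * cos x ^ k * (sin x * sin x)"
      unfolding q by (simp add: algebra_simps)
    also have "\<dots> = x * (real (k+2) * cos x ^ (k+2) - real (k+1) * cos x ^ k)"
      unfolding s by (simp add: algebra_simps)
    finally show ?thesis .
  qed
  ultimately show ?thesis by simp
qed
lemma cb_nat: "(n+1) * ((2*n+2) choose (n+1)) = 2 * (2*n+1) * ((2*n) choose n)"
proof -
  have a: "Suc n * (Suc (2*n+1) choose Suc n) = Suc (2*n+1) * ((2*n+1) choose n)"
    by (rule Suc_times_binomial)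
  have b: "Suc n * (Suc (2*n) choose Suc n) = Suc (2*n) * ((2*n) choose n)"
    by (rule Suc_times_binomial)
  have c: "((2*n+1) choose n) = (Suc (2*n) choose Suc n)"
    using binomial_symmetric[of n "2*n+1"] by simp
  define A where "A = (Suc (2*n+1) choose Suc n)"
  define B where "B = (Suc (2*n) choose Suc n)"
  define C where "C = ((2*n) choose n)"
  have a': "Suc n * A = Suc (2*n+1) * B" using a c unfolding A_def B_def by simp
  have b': "Suc n * B = Suc (2*n) * C" using b unfolding B_def C_def by simp
  have "Suc n * A = Suc n * (2 * B)" using a' by (simp add: algebra_simps)
  then have "A = 2 * B" by (metis mult_left_cancel nat.distinct(1))
  then have "Suc n * A = 2 * (2*n+1) * C" using b' by simp
  then show ?thesis unfolding A_def C_def by (simp add: numeral_2_eq_2)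
qed



lemma rec_solve:
  fixes A b j k :: real
  assumes "A*j - b*k = -1/A" "A > 0"
  shows "j = (b*k - 1/A)/A"
  using assms by (simp add: field_simps)

lemma alg_even:
  fixes a b c c' P x J :: real
  assumes "a > 0" "b > 0" "c > 0" "P > 0" "c' = 2*b*c/a" "J = (b * (c / (4*P) * x) - 1/(2*a)) / (2*a)"
  shows "J = c' / (16*P) * (x - 4*P / (a^2 * c'))"
  using assms(1-4) unfolding assms(5,6) by (simp add: field_simps power2_eq_square)
lemma alg_odd:
  fixes a b c c' P x J d :: real
  assumes "a > 0" "b > 0" "c > 0" "P > 0" "d > 0" "c' = 2*b*c/a" "J = ((2*a) * (P / (b * c) * x) - 1/d) / d"
  shows "J = (4*P) / (d * c') * (x - c' / (4*P * d))"
  using assms(1-5) unfolding assms(6,7) by (simp add: field_simps power2_eq_square)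

lemma J_rec: "real (k+2) * J (k+2) - real (k+1) * J k = - 1 / real (k+2)"
proof -
  define G where "G x = x * cos x ^ (k+1) * sin x + cos x ^ (k+2) / real (k+2)" for x :: real
  define f where "f x = x * (real (k+2) * cos x ^ (k+2) - real (k+1) * cos x ^ k)" for x :: real
  have d: "(G has_real_derivative f x) (at x)" for x
    unfolding G_def f_def by (rule Gderiv)
  have dv: "(G has_vector_derivative f x) (at x within {0..pi/2})" for x
    unfolding has_real_derivative_iff_has_vector_derivative[symmetric]
    by (rule has_field_derivative_at_within[OF d])
  have ftc: "(f has_integral (G (pi/2) - G 0)) {0..pi/2}"
    by (rule fundamental_theorem_of_calculus) (simp_all add: dv)
  have Gv: "G (pi/2) - G 0 = -1 / real (k+2)" by (simp add: G_def)
  have i: "integral {0..pi/2} f = -1 / real (k+2)"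
    using ftc unfolding Gv by (rule integral_unique)
  have i1: "(\<lambda>x::real. x * cos x ^ (k+2)) integrable_on {0..pi/2}" by (rule J_int)
  have i2: "(\<lambda>x::real. x * cos x ^ k) integrable_on {0..pi/2}" by (rule J_int)
  have "integral {0..pi/2} f
      = integral {0..pi/2} (\<lambda>x. real (k+2) * (x * cos x ^ (k+2)) - real (k+1) * (x * cos x ^ k))"
    by (intro integral_cong) (simp add: f_def algebra_simps)
  also have "\<dots> = integral {0..pi/2} (\<lambda>x. real (k+2) * (x * cos x ^ (k+2))) - integral {0..pi/2} (\<lambda>x. real (k+1) * (x * cos x ^ k))"
    by (rule integral_diff; intro integrable_continuous_interval continuous_intros)
  also have "\<dots> = real (k+2) * J (k+2) - real (k+1) * J k"
    unfolding J_def by (simp only: integral_mult_right)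
  finally show ?thesis using i by simp
qed

lemma J0: "J 0 = pi^2/8"
proof -
  have "((\<lambda>x::real. x) has_integral ((pi/2)^2/2 - 0^2/2)) {0..pi/2}"
    by (rule fundamental_theorem_of_calculus) (auto intro!: derivative_eq_intros simp: has_real_derivative_iff_has_vector_derivative[symmetric])
  then show ?thesis unfolding J_def by (simp add: integral_unique power2_eq_square)
qed

lemma J1: "J 1 = pi/2 - 1"
proof -
  have "((\<lambda>x::real. x * cos x) has_integral ((pi/2 * sin (pi/2) + cos (pi/2)) - (0 * sin 0 + cos 0))) {0..pi/2}"
    by (rule fundamental_theorem_of_calculus) (auto intro!: derivative_eq_intros simp: has_real_derivative_iff_has_vector_derivative[symmetric])
  then show ?thesis unfolding J_def by (simp add: integral_unique)
qed

lemma cb: "real (n+1) * real ((2*n+2) choose (n+1)) = 2 * real (2*n+1) * real ((2*n) choose n)"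
  using cb_nat[of n] by (metis of_nat_mult of_nat_numeral)

theorem theorem2p6:
  fixes n :: nat
  shows "(integral {0..pi/2} (\<lambda>x::real. x * cos x ^ (2*n))
           = real ((2*n) choose n) / 2 ^ (2*n+2)
             * (pi^2 / 2 - (\<Sum>k=1..n. 2 ^ (2*k) / (real k ^ 2 * real ((2*k) choose k))))) \<and>
         (integral {0..pi/2} (\<lambda>x::real. x * cos x ^ (2*n+1))
           = 2 ^ (2*n) / (real (2*n+1) * real ((2*n) choose n))
             * (pi / 2 - (\<Sum>k=0..n. real ((2*k) choose k) / (2 ^ (2*k) * real (2*k+1)))))"
proof -
  have E: "J (2*n) = real ((2*n) choose n) / 2 ^ (2*n+2)
             * (pi^2 / 2 - (\<Sum>k=1..n. 2 ^ (2*k) / (real k ^ 2 * real ((2*k) choose k))))"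
  proof (induction n)
    case 0 then show ?case by (simp add: J0)
  next
    case (Suc n)
    define a where "a = real (n+1)"
    define b where "b = real (2*n+1)"
    define c where "c = real ((2*n) choose n)"
    define c' where "c' = real ((2*n+2) choose (n+1))"
    define P where "P = (2::real)^(2*n)"
    define S where "S = (\<Sum>k=1..n. 2 ^ (2*k) / (real k ^ 2 * real ((2*k) choose k)) :: real)"
    define x where "x = pi^2/2 - S"
    have apos: "a > 0" and bpos: "b > 0" and Ppos: "P > 0" by (simp_all add: a_def b_def P_def)
    have cpos: "c > 0" unfolding c_def by (simp only: of_nat_0_less_iff) (rule zero_less_binomial, simp)
    have cc: "a * c' = 2 * b * c" using cb[of n] by (simp only: a_def b_def c_def c'_def)
    have ce: "c' = 2*b*c/a" using cc apos by (simp add: field_simps)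
    have A2: "real (2*n+2) = 2*a" by (simp add: a_def)
    have r: "J (2*n+2) = (b * J (2*n) - 1/(2*a)) / (2*a)"
      using rec_solve[of "real (2*n+2)" "J (2*n+2)" "real (2*n+1)" "J (2*n)"] J_rec[of "2*n"] apos
      unfolding A2 b_def by simp
    have IH: "J (2*n) = c / (4*P) * x"
      using Suc.IH by (simp add: c_def S_def x_def P_def power_add)
    have R: "J (2*n+2) = c' / (16*P) * (x - 4*P / (a^2 * c'))"
      by (rule alg_even[OF apos bpos cpos Ppos ce]) (unfold r IH, rule refl)
    have e1: "2 * Suc n = 2*n+2" by simp
    have e2: "real ((2 * Suc n) choose (Suc n)) = c'" unfolding c'_def e1 by (simp only: Suc_eq_plus1)
    have e3: "(2::real) ^ (2 * Suc n + 2) = 16 * P" unfolding P_def by (simp add: power_add)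
    have e4: "(\<Sum>k=1..Suc n. 2 ^ (2*k) / (real k ^ 2 * real ((2*k) choose k)) :: real)
        = S + 4*P / (a^2 * c')"
    proof -
      have "(\<Sum>k=1..Suc n. 2 ^ (2*k) / (real k ^ 2 * real ((2*k) choose k)) :: real)
         = S + 2 ^ (2 * Suc n) / (real (Suc n) ^ 2 * real ((2 * Suc n) choose (Suc n)))"
        unfolding S_def by (simp del: binomial_Suc_Suc)
      also have "\<dots> = S + 4*P / (a^2 * c')"
        unfolding e2 by (simp add: P_def a_def power_add)
      finally show ?thesis .
    qed
    show ?case unfolding e2 e3 e4 using R unfolding x_def e1 by (simp add: algebra_simps)
  qed
  have O: "J (2*n+1) = 2 ^ (2*n) / (real (2*n+1) * real ((2*n) choose n))
             * (pi / 2 - (\<Sum>k=0..n. real ((2*k) choose k) / (2 ^ (2*k) * real (2*k+1))))"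
  proof (induction n)
    case 0 then show ?case using J1 by simp
  next
    case (Suc n)
    define a where "a = real (n+1)"
    define b where "b = real (2*n+1)"
    define d where "d = real (2*n+3)"
    define c where "c = real ((2*n) choose n)"
    define c' where "c' = real ((2*n+2) choose (n+1))"
    define P where "P = (2::real)^(2*n)"
    define T where "T = (\<Sum>k=0..n. real ((2*k) choose k) / (2 ^ (2*k) * real (2*k+1)) :: real)"
    define x where "x = pi/2 - T"
    have apos: "a > 0" and bpos: "b > 0" and dpos: "d > 0" and Ppos: "P > 0" by (simp_all add: a_def b_def d_def P_def)
    have cpos: "c > 0" unfolding c_def by (simp only: of_nat_0_less_iff) (rule zero_less_binomial, simp)
    have cc: "a * c' = 2 * b * c" using cb[of n] by (simp only: a_def b_def c_def c'_def)
    have ce: "c' = 2*b*c/a" using cc apos by (simp add: field_simps)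
    have A2: "real (2*n+1+2) = d" by (simp add: d_def)
    have A1: "real (2*n+1+1) = 2*a" by (simp add: a_def)
    have r: "J (2*n+1+2) = ((2*a) * J (2*n+1) - 1/d) / d"
      using rec_solve[of "real (2*n+1+2)" "J (2*n+1+2)" "real (2*n+1+1)" "J (2*n+1)"] J_rec[of "2*n+1"] dpos
      unfolding A2 A1 by simp
    have IH: "J (2*n+1) = P / (b * c) * x"
      using Suc.IH by (simp add: c_def T_def x_def P_def b_def)
    have R: "J (2*n+1+2) = (4*P) / (d * c') * (x - c' / (4*P * d))"
      by (rule alg_odd[OF apos bpos cpos Ppos dpos ce]) (unfold r IH, rule refl)
    have e1: "2 * Suc n = 2*n+2" by simp
    have e0: "2 * Suc n + 1 = 2*n+1+2" by simp
    have e2: "real ((2 * Suc n) choose (Suc n)) = c'" unfolding c'_def e1 by (simp only: Suc_eq_plus1)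
    have e3: "(2::real) ^ (2 * Suc n) = 4 * P" unfolding P_def by (simp add: power_add)
    have e5: "real (2 * Suc n + 1) = d" by (simp add: d_def)
    have e4: "(\<Sum>k=0..Suc n. real ((2*k) choose k) / (2 ^ (2*k) * real (2*k+1)) :: real)
        = T + c' / (4*P * d)"
    proof -
      have "(\<Sum>k=0..Suc n. real ((2*k) choose k) / (2 ^ (2*k) * real (2*k+1)) :: real)
         = T + real ((2 * Suc n) choose (Suc n)) / (2 ^ (2 * Suc n) * real (2 * Suc n + 1))"
        unfolding T_def by (simp del: binomial_Suc_Suc)
      also have "\<dots> = T + c' / (4*P * d)"
        unfolding e2 e3 e5 by simp
      finally show ?thesis .
    qed
    have G: "J (2*Suc n+1) = 4*P/(d*c') * (pi/2 - (T + c'/(4*P*d)))"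
      unfolding e0 R x_def by (simp only: diff_diff_eq)
    show ?case using G by (simp only: e2 e3 e4 e5)
  qed
  show ?thesis using E O unfolding J_def by simp
qed

end
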